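(* Let $X$ be a real Banach space, $h:X\to\mathbb R\cup\{+\infty\}$ proper and lower semicontinuous, and $\bar x$ a global minimizer of $h$. Let $p,q\in(1,+\infty)$ with $p^{-1}+q^{-1}=1$ and $\kappa>0$, and define $$Z:=\bigcup_{x\in X}\{\xi\in X^*:\ \xi\in\partial h(x)\ \text{and}\ \|x-\bar x\|\le\kappa\|\xi\|^{q/p}\}.$$ Then for every $\theta\in(0,1]$, $$h(x)\ge h(\bar x)+\frac12\Big(\frac{\theta}{2\kappa}\Big)^{p/q}\|x-\bar x\|^p\quad\text{for every }x\in\bar x+2\kappa\theta^{-1}J_p^{-1}(\overline Z),$$ where $\overline Z$ is the norm closure of $Z$ in $X^*$.
   Context: The (Fenchel–Moreau) subdifferential of $h$ at $x$ is $\partial h(x):=\{\xi\in X^*: x \text{ is a global minimizer on } X \text{ of } h-\langle\xi,\cdot\rangle\}$ (defined for possibly nonconvex $h$). For $p\in[1,\infty)$ the duality mapping is $J_p(x):=\{\xi\in X^*:\langle\xi,x\rangle=\|\xi\|\|x\|,\ \|\xi\|=\|x\|^{p-1}\}$, and for $A\subset X^*$, $J_p^{-1}(A):=\{x\in X: J_p(x)\cap A\neq\emptyset\}$. *)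

theory Defs
  imports "HOL-Analysis.Analysis"
begin

definition proper_fun :: "('a \<Rightarrow> ereal) \<Rightarrow> bool" where
  "proper_fun h \<longleftrightarrow> (\<forall>x. h x \<noteq> -\<infinity>) \<and> (\<exists>x. h x \<noteq> \<infinity>)"

definition lsc_fun :: "('a::topological_space \<Rightarrow> ereal) \<Rightarrow> bool" where
  "lsc_fun h \<longleftrightarrow> (\<forall>c. closed {x. h x \<le> c})"

text \<open>Fenchel--Moreau subdifferential: x is a global minimizer of h - <xi,.>.\<close>
definition subdiff :: "('a::real_normed_vector \<Rightarrow> ereal) \<Rightarrow> 'a \<Rightarrow> ('a \<Rightarrow>\<^sub>L real) set" where
  "subdiff h x = {\<xi>. \<forall>y. h x - ereal (blinfun_apply \<xi> x) \<le> h y - ereal (blinfun_apply \<xi> y)}"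

definition duality_map :: "real \<Rightarrow> 'a::real_normed_vector \<Rightarrow> ('a \<Rightarrow>\<^sub>L real) set" where
  "duality_map p x = {\<xi>. blinfun_apply \<xi> x = norm \<xi> * norm x \<and> norm \<xi> = norm x powr (p - 1)}"

definition duality_map_inv :: "real \<Rightarrow> ('a::real_normed_vector \<Rightarrow>\<^sub>L real) set \<Rightarrow> 'a set" where
  "duality_map_inv p A = {x. duality_map p x \<inter> A \<noteq> {}}"

end

theory Submission
  imports Defs
begin

lemma cont_g:
  fixes v :: "'a::real_normed_vector" and k q :: real
  assumes "q > 0"
  shows "continuous_on UNIV (\<lambda>\<xi>::'a \<Rightarrow>\<^sub>L real. blinfun_apply \<xi> v - k * norm \<xi> powr q)"
proof -
  have c1: "continuous_on UNIV (\<lambda>\<xi>::'a \<Rightarrow>\<^sub>L real. blinfun_apply \<xi> v)"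
    by (intro continuous_intros)
  have c2: "continuous_on UNIV (\<lambda>\<xi>::'a \<Rightarrow>\<^sub>L real. norm \<xi> powr q)"
    by (rule continuous_on_powr') (use assms in \<open>auto intro: continuous_intros\<close>)
  show ?thesis by (intro continuous_intros c1 c2)
qed

theorem lemma2p2:
  fixes h :: "'a::banach \<Rightarrow> ereal" and xbar :: 'a and p q \<kappa> \<theta> :: real
    and Z :: "('a \<Rightarrow>\<^sub>L real) set"
  assumes "proper_fun h" and "lsc_fun h"
    and "\<forall>y. h xbar \<le> h y"
    and "p > 1" and "q > 1" and "1 / p + 1 / q = 1" and "\<kappa> > 0"
    and "Z = (\<Union>x. {\<xi>. \<xi> \<in> subdiff h x \<and> norm (x - xbar) \<le> \<kappa> * norm \<xi> powr (q / p)})"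
    and "0 < \<theta>" and "\<theta> \<le> 1"
    and "x \<in> (\<lambda>y. xbar + (2 * \<kappa> / \<theta>) *\<^sub>R y) ` duality_map_inv p (closure Z)"
  shows "h x \<ge> h xbar + ereal ((1 / 2) * (\<theta> / (2 * \<kappa>)) powr (p / q) * norm (x - xbar) powr p)"
proof -
  note pq = assms(4,5,6)
  have qp: "q / p = q - 1" using pq by (simp add: field_simps)
  have pq1: "p / q = p - 1" using pq by (simp add: field_simps)
  have pqm: "(p - 1) * q = p" using pq by (simp add: field_simps)
  obtain w where w: "h w \<noteq> \<infinity>" using assms(1) unfolding proper_fun_def by auto
  have "h xbar \<noteq> -\<infinity>" using assms(1) unfolding proper_fun_def by auto
  moreover have "h xbar \<noteq> \<infinity>" using assms(3) w by (metis ereal_infty_less_eq(1))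
  ultimately obtain r where r: "h xbar = ereal r" by (cases "h xbar") auto
  show ?thesis
  proof (cases "h x = \<infinity>")
    case True then show ?thesis by simp
  next
    case False
    have "h x \<noteq> -\<infinity>" using assms(1) unfolding proper_fun_def by auto
    with False obtain s where s: "h x = ereal s" by (cases "h x") auto
    let ?g = "\<lambda>\<xi>::'a \<Rightarrow>\<^sub>L real. blinfun_apply \<xi> (x - xbar) - \<kappa> * norm \<xi> powr q"
    have Zsub: "Z \<subseteq> {\<xi>. ?g \<xi> \<le> s - r}"
    proof
      fix \<xi> assume "\<xi> \<in> Z"
      then obtain z where sd: "\<xi> \<in> subdiff h z" and nz: "norm (z - xbar) \<le> \<kappa> * norm \<xi> powr (q / p)"
        using assms(8) by auto
      have i1: "h z - ereal (blinfun_apply \<xi> z) \<le> h x - ereal (blinfun_apply \<xi> x)"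
        using sd unfolding subdiff_def by auto
      have "h xbar - ereal (blinfun_apply \<xi> z) \<le> h z - ereal (blinfun_apply \<xi> z)"
        using assms(3) by (simp add: ereal_minus_mono)
      from this i1 have "h xbar - ereal (blinfun_apply \<xi> z) \<le> h x - ereal (blinfun_apply \<xi> x)"
        by (rule order_trans)
      hence "r - blinfun_apply \<xi> z \<le> s - blinfun_apply \<xi> x" using r s by simp
      hence A: "blinfun_apply \<xi> x - blinfun_apply \<xi> z \<le> s - r" by simp
      have "blinfun_apply \<xi> (z - xbar) \<le> norm \<xi> * norm (z - xbar)"
        by (metis abs_le_D1 norm_blinfun real_norm_def)
      also have "\<dots> \<le> norm \<xi> * (\<kappa> * norm \<xi> powr (q / p))"
        by (rule mult_left_mono[OF nz]) simp
      also have "\<dots> = \<kappa> * norm \<xi> powr q"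
      proof (cases "norm \<xi> = 0")
        case True then show ?thesis using pq by simp
      next
        case False
        then have "norm \<xi> * norm \<xi> powr (q / p) = norm \<xi> powr (1 + q/p)"
          by (simp add: powr_add)
        also have "1 + q/p = q" using qp by simp
        finally show ?thesis by simp
      qed
      finally have B: "blinfun_apply \<xi> (z - xbar) \<le> \<kappa> * norm \<xi> powr q" .
      have "blinfun_apply \<xi> (x - xbar) = blinfun_apply \<xi> x - blinfun_apply \<xi> z + blinfun_apply \<xi> (z - xbar)"
        by (simp add: blinfun.diff_right)
      with A B show "\<xi> \<in> {\<xi>. ?g \<xi> \<le> s - r}" by simp
    qed
    have "closed {\<xi>. ?g \<xi> \<le> s - r}"
      using cont_g[of q "x - xbar" \<kappa>] pq
      by (intro closed_Collect_le[OF _ continuous_on_const]) auto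
    with Zsub have Csub: "closure Z \<subseteq> {\<xi>. ?g \<xi> \<le> s - r}" by (rule closure_minimal)
    define t where "t = 2 * \<kappa> / \<theta>"
    obtain y \<zeta> where xy: "x = xbar + t *\<^sub>R y" and \<zeta>Z: "\<zeta> \<in> closure Z"
      and \<zeta>1: "blinfun_apply \<zeta> y = norm \<zeta> * norm y" and \<zeta>2: "norm \<zeta> = norm y powr (p - 1)"
      using assms(11) unfolding duality_map_inv_def duality_map_def t_def by blast
    have tpos: "t > 0" using assms t_def by simp
    have gz: "?g \<zeta> \<le> s - r" using Csub \<zeta>Z by auto
    have e1: "blinfun_apply \<zeta> (x - xbar) = t * norm y powr p"
    proof (cases "y = 0")
      case True then show ?thesis using xy pq by simp
    next
      case False
      have "blinfun_apply \<zeta> (x - xbar) = t * (norm y powr (p - 1) * norm y powr 1)"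
        using xy \<zeta>1 \<zeta>2 by (simp add: blinfun.scaleR_right)
      also have "\<dots> = t * norm y powr (p - 1 + 1)" using False by (simp only: powr_add)
      also have "\<dots> = t * norm y powr p" by simp
      finally show ?thesis .
    qed
    have e2: "norm \<zeta> powr q = norm y powr p"
      using \<zeta>2 pqm by (simp add: powr_powr)
    have main: "(t - \<kappa>) * norm y powr p \<le> s - r"
      using gz e1 e2 by (simp add: algebra_simps)
    have nx: "norm (x - xbar) = t * norm y" using xy tpos by simp
    have tp: "t powr p = t powr (p - 1) * t powr 1"
      by (simp only: powr_add[symmetric]) simp
    have "(\<theta> / (2 * \<kappa>)) powr (p / q) * norm (x - xbar) powr p
        = (\<theta> / (2 * \<kappa>)) powr (p - 1) * (t powr (p - 1) * t powr 1) * norm y powr p"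
      using nx tpos pq1 by (simp only: powr_mult tp)
    also have "\<dots> = ((\<theta> / (2 * \<kappa>)) * t) powr (p - 1) * t * norm y powr p"
      using tpos assms(7,9) powr_mult[of "\<theta> / (2 * \<kappa>)" t "p - 1"] by simp
    also have "(\<theta> / (2 * \<kappa>)) * t = 1" using assms(7,9) t_def by simp
    finally have R: "(1/2) * (\<theta> / (2 * \<kappa>)) powr (p / q) * norm (x - xbar) powr p = (t/2) * norm y powr p"
      by simp
    have "\<kappa> \<le> t / 2"
    proof -
      have "2 * \<kappa> * 1 \<le> 2 * \<kappa> * (1 / \<theta>)"
        using assms(7,9,10) by (intro mult_left_mono) auto
      thus ?thesis unfolding t_def by simp
    qed
    hence "(t/2) * norm y powr p \<le> (t - \<kappa>) * norm y powr p"
      by (intro mult_right_mono) auto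
    with main R have "(1/2) * (\<theta> / (2 * \<kappa>)) powr (p / q) * norm (x - xbar) powr p \<le> s - r" by simp
    then show ?thesis using r s by simp
  qed
qed

end
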